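(* Let $\lambda_{\max}>1$ and let $F:[0,\lambda_{\max}]\to\mathbb{R}_+$ be continuously differentiable with $F(0)=0$, such that $F(x)<F^\star$ for all $x\in[0,1)$, $F'(1)>0$, and $F$ is not concave-like. For $U\ge0$ define the dual function $$q(U)=\inf_{\alpha}\big\{\mathbb{E}_\alpha[-F(X)+UX]-U\big\},$$ the infimum over probability measures $\alpha$ on $[0,\lambda_{\max}]$ (with $X\sim\alpha$). Let $U^\star$ be an optimal solution of $\max_{U\ge0}q(U)$. Then $q(U^\star)=\max_{U\ge0}q(U)=-F^\star$, and there exists $L>0$ such that $$q(U^\star)\ge q(U)+L|U^\star-U|\quad\text{for all }U\ge0.$$
   Context: $F^\star=\sup\{\mathbb{E}_\alpha[F(X)]:\alpha$ a probability measure on $[0,\lambda_{\max}]$, $X\sim\alpha$, $\mathbb{E}_\alpha[X]\le1\}$. $F$ is concave-like if for all $x_1,x_2\in[0,\lambda_{\max}]\setminus\{1\}$, $p\in(0,1)$ with $px_1+(1-p)x_2=1$, we have $F(1)>pF(x_1)+(1-p)F(x_2)$. *)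

theory Defs
  imports "HOL-Probability.Probability"
begin

definition prob_on :: "real \<Rightarrow> real measure \<Rightarrow> bool" where
  "prob_on lmax M \<longleftrightarrow> prob_space M \<and> sets M = sets (restrict_space borel {0..lmax})"

definition Fstar :: "(real \<Rightarrow> real) \<Rightarrow> real \<Rightarrow> real" where
  "Fstar F lmax = Sup {(\<integral>x. F x \<partial>M) | M. prob_on lmax M \<and> (\<integral>x. x \<partial>M) \<le> 1}"

definition concave_like :: "(real \<Rightarrow> real) \<Rightarrow> real \<Rightarrow> bool" where
  "concave_like F lmax \<longleftrightarrow>
     (\<forall>x1 \<in> {0..lmax} - {1}. \<forall>x2 \<in> {0..lmax} - {1}. \<forall>p \<in> {0<..<1}.
        p * x1 + (1 - p) * x2 = 1 \<longrightarrow> F 1 > p * F x1 + (1 - p) * F x2)"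

definition dualq :: "(real \<Rightarrow> real) \<Rightarrow> real \<Rightarrow> real \<Rightarrow> real" where
  "dualq F lmax U = Inf {(\<integral>x. (- F x + U * x) \<partial>M) - U | M. prob_on lmax M}"

end

theory Submission imports Defs begin

lemma prob_on_space: "prob_on lmax M \<Longrightarrow> space M = {0..lmax}"
  unfolding prob_on_def by (metis sets_eq_imp_space_eq space_borel space_restrict_space inf_top_right)

lemma prob_on_meas:
  assumes "prob_on lmax M" "continuous_on {0..lmax} f"
  shows "f \<in> borel_measurable M"
  using assms unfolding prob_on_def
  by (metis borel_measurable_continuous_on_restrict measurable_cong_sets)

lemma prob_on_int:
  fixes f :: "real \<Rightarrow> real"
  assumes "prob_on lmax M" "continuous_on {0..lmax} f"
  shows "integrable M f"
proof -
  have ps: "prob_space M" using assms(1) unfolding prob_on_def by auto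
  have "compact (f ` {0..lmax})" by (intro compact_continuous_image assms(2)) auto
  then obtain B where B: "\<forall>y\<in>f ` {0..lmax}. norm y \<le> B" using compact_imp_bounded bounded_iff by metis
  show ?thesis
    apply (rule finite_measure.integrable_const_bound[OF prob_space.finite_measure[OF ps], where B=B])
    using B prob_on_space[OF assms(1)] apply (auto intro!: AE_I2)[1]
    using prob_on_meas[OF assms] .
qed

lemma prob_on_ge:
  fixes f :: "real \<Rightarrow> real"
  assumes "prob_on lmax M" "continuous_on {0..lmax} f" "\<forall>x\<in>{0..lmax}. c \<le> f x"
  shows "c \<le> (\<integral>x. f x \<partial>M)"
  apply (rule prob_space.integral_ge_const)
  using assms prob_on_int[OF assms(1,2)] prob_on_space[OF assms(1)] unfolding prob_on_def
  by (auto intro!: AE_I2)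

lemma prob_on_return:
  assumes "x \<in> {0..lmax}"
  shows "prob_on lmax (return (restrict_space borel {0..lmax}) x)"
  unfolding prob_on_def using assms by (auto intro!: prob_space_return)

lemma int_return:
  fixes f :: "real \<Rightarrow> real"
  assumes "x \<in> {0..lmax}" "continuous_on {0..lmax} f"
  shows "(\<integral>y. f y \<partial>return (restrict_space borel {0..lmax}) x) = f x"
  using assms by (intro integral_return) (auto intro!: borel_measurable_continuous_on_restrict)

definition two :: "real \<Rightarrow> real \<Rightarrow> real \<Rightarrow> real \<Rightarrow> real measure" where "two lmax p x1 x2 = distr (measure_pmf (bernoulli_pmf p)) (restrict_space borel {0..lmax}) (\<lambda>b. if b then x1 else x2)"

lemma two_prob:
  assumes "x1 \<in> {0..lmax}" "x2 \<in> {0..lmax}"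
  shows "prob_on lmax (two lmax p x1 x2)"
  unfolding prob_on_def two_def using assms
  by (auto intro!: prob_space.prob_space_distr prob_space_measure_pmf)

lemma two_int:
  fixes f :: "real \<Rightarrow> real"
  assumes "x1 \<in> {0..lmax}" "x2 \<in> {0..lmax}" "continuous_on {0..lmax} f" "0 \<le> p" "p \<le> 1"
  shows "(\<integral>y. f y \<partial>two lmax p x1 x2) = p * f x1 + (1 - p) * f x2"
  unfolding two_def using assms
  by (subst integral_distr) (auto intro!: borel_measurable_continuous_on_restrict)

lemma dualq_char:
  assumes cF: "continuous_on {0..lmax} F" and l: "lmax \<ge> 0"
  shows "\<exists>x\<in>{0..lmax}. dualq F lmax U = - F x + U * x - U \<and>
     (\<forall>y\<in>{0..lmax}. dualq F lmax U \<le> - F y + U * y - U)"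
proof -
  have ck: "continuous_on {0..lmax} (\<lambda>x. - F x + U * x)"
    by (intro continuous_intros cF)
  obtain x where x: "x \<in> {0..lmax}" "\<forall>y\<in>{0..lmax}. - F x + U * x \<le> - F y + U * y"
    using continuous_attains_inf[OF _ _ ck] l by fastforce
  have "dualq F lmax U = - F x + U * x - U"
    unfolding dualq_def
  proof (rule cInf_eq_minimum)
    show "- F x + U * x - U \<in> {(\<integral>x. (- F x + U * x) \<partial>M) - U | M. prob_on lmax M}"
      using prob_on_return[OF x(1)] int_return[OF x(1) ck] by force
  next
    fix z assume "z \<in> {(\<integral>x. (- F x + U * x) \<partial>M) - U | M. prob_on lmax M}"
    then obtain M where M: "prob_on lmax M" "z = (\<integral>x. (- F x + U * x) \<partial>M) - U" by auto
    have "- F x + U * x \<le> (\<integral>x. (- F x + U * x) \<partial>M)"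
      by (rule prob_on_ge[OF M(1) ck]) (use x in auto)
    then show "- F x + U * x - U \<le> z" using M by simp
  qed
  then show ?thesis using x by auto
qed

lemma Fstar_eq:
  assumes cF: "continuous_on {0..lmax} F" and M0: "prob_on lmax M0" "(\<integral>x. x \<partial>M0) \<le> 1"
    "(\<integral>x. F x \<partial>M0) = v"
    and ub: "\<And>M. prob_on lmax M \<Longrightarrow> (\<integral>x. x \<partial>M) \<le> 1 \<Longrightarrow> (\<integral>x. F x \<partial>M) \<le> v"
  shows "Fstar F lmax = v"
  unfolding Fstar_def
  by (rule cSup_eq_maximum) (use M0 ub in auto)

theorem theorem5p5:
  fixes F F' :: "real \<Rightarrow> real" and lmax Ustar :: real
  assumes lmax: "lmax > 1"
    and nonneg: "\<forall>x \<in> {0..lmax}. F x \<ge> 0"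
    and deriv: "\<forall>x \<in> {0..lmax}. (F has_real_derivative F' x) (at x within {0..lmax})"
    and cont_deriv: "continuous_on {0..lmax} F'"
    and F0: "F 0 = 0"
    and below: "\<forall>x \<in> {0..<1}. F x < Fstar F lmax"
    and dpos: "F' 1 > 0"
    and notcl: "\<not> concave_like F lmax"
    and Ustar_nonneg: "Ustar \<ge> 0"
    and Ustar_opt: "\<forall>U \<ge> 0. dualq F lmax U \<le> dualq F lmax Ustar"
  shows "dualq F lmax Ustar = - Fstar F lmax \<and>
         (\<exists>L > 0. \<forall>U \<ge> 0. dualq F lmax Ustar \<ge> dualq F lmax U + L * \<bar>Ustar - U\<bar>)"
proof -
  have cF: "continuous_on {0..lmax} F"
    by (rule DERIV_continuous_on) (use deriv in auto)
  define k where "k U x = - F x + U * x - U" for U x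
  have char: "\<exists>x\<in>{0..lmax}. dualq F lmax U = k U x \<and> (\<forall>y\<in>{0..lmax}. dualq F lmax U \<le> k U y)" for U
    using dualq_char[OF cF, of U] lmax unfolding k_def by auto
  define c where "c = dualq F lmax Ustar"
  have cle: "\<forall>y\<in>{0..lmax}. c \<le> k Ustar y" using char[of Ustar] unfolding c_def by auto
  have kU: "k U x = k Ustar x + (U - Ustar) * (x - 1)" for U x unfolding k_def by algebra
  have ck: "continuous_on S (k Ustar)" if "S \<subseteq> {0..lmax}" for S
    unfolding k_def by (intro continuous_intros continuous_on_subset[OF cF] that)
  have step3: "\<exists>x\<in>{0..lmax}. x \<le> 1 \<and> k Ustar x = c"
  proof (rule ccontr)
    assume no: "\<not> ?thesis"
    obtain z where z: "z \<in> {0..1}" "\<forall>y\<in>{0..1}. k Ustar z \<le> k Ustar y"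
      using continuous_attains_inf[OF _ _ ck[of "{0..1}"]] lmax by fastforce
    have zc: "k Ustar z > c" using no z cle lmax by (metis atLeastAtMost_iff less_eq_real_def order.trans)
    define e where "e = (k Ustar z - c) / 2"
    have e: "e > 0" using zc e_def by auto
    obtain x where x: "x \<in> {0..lmax}" "dualq F lmax (Ustar + e) = k (Ustar + e) x"
      using char by blast
    have "k (Ustar + e) x > c"
    proof (cases "x \<le> 1")
      case True
      have "k Ustar z \<le> k Ustar x" using z True x by auto
      moreover have "e * (x - 1) \<ge> - e" using e x by (simp add: algebra_simps)
      moreover have "k (Ustar + e) x = k Ustar x + e * (x - 1)" using kU[of "Ustar + e" x] by simp
      moreover have "k Ustar z = c + 2 * e" using e_def by simp
      ultimately show ?thesis using e by linarith
    next
      case False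
      then have "e * (x - 1) > 0" using e by simp
      moreover have "k (Ustar + e) x = k Ustar x + e * (x - 1)" using kU[of "Ustar + e" x] by simp
      moreover have "c \<le> k Ustar x" using cle x by blast
      ultimately show ?thesis by linarith
    qed
    then show False using Ustar_opt x e Ustar_nonneg unfolding c_def
      by (metis add_nonneg_nonneg less_eq_real_def not_le)
  qed
  have step5: "\<exists>x\<in>{0..lmax}. x \<ge> 1 \<and> k Ustar x = c" if Up: "Ustar > 0"
  proof (rule ccontr)
    assume no: "\<not> ?thesis"
    obtain z where z: "z \<in> {1..lmax}" "\<forall>y\<in>{1..lmax}. k Ustar z \<le> k Ustar y"
      using continuous_attains_inf[OF _ _ ck[of "{1..lmax}"]] lmax by fastforce
    have zc: "k Ustar z > c" using no z cle lmax
      by (metis atLeastAtMost_iff less_eq_real_def order.trans zero_le_one)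
    define e where "e = min Ustar ((k Ustar z - c) / (2 * (lmax - 1)))"
    have e: "e > 0" using zc e_def Up lmax by auto
    have eU: "e \<le> Ustar" unfolding e_def by simp
    have e2: "e * (lmax - 1) \<le> (k Ustar z - c) / 2"
    proof -
      have "e \<le> (k Ustar z - c) / (2 * (lmax - 1))" unfolding e_def by simp
      then have "e * (lmax - 1) \<le> (k Ustar z - c) / (2 * (lmax - 1)) * (lmax - 1)"
        using lmax by (intro mult_right_mono) auto
      also have "\<dots> = (k Ustar z - c) / 2" using lmax by (simp add: field_simps)
      finally show ?thesis .
    qed
    obtain x where x: "x \<in> {0..lmax}" "dualq F lmax (Ustar - e) = k (Ustar - e) x"
      using char by blast
    have "k (Ustar - e) x > c"
    proof (cases "x \<ge> 1")
      case True
      have "k Ustar z \<le> k Ustar x" using z True x by auto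
      moreover have "e * (x - 1) \<le> e * (lmax - 1)" using e x by (intro mult_left_mono) auto
      ultimately show ?thesis using kU[of "Ustar - e" x] e2 zc by (simp add: algebra_simps)
    next
      case False
      then have "e * (1 - x) > 0" using e by simp
      moreover have "k (Ustar - e) x = k Ustar x + e * (1 - x)" using kU[of "Ustar - e" x] by (simp add: algebra_simps)
      moreover have "c \<le> k Ustar x" using cle x by blast
      ultimately show ?thesis by linarith
    qed
    then show False using Ustar_opt x eU unfolding c_def
      by (metis diff_ge_0_iff_ge not_le)
  qed
  have ncl: "(\<exists>a\<in>{0..lmax}. a < 1 \<and> k Ustar a = c) \<and> (\<exists>b\<in>{0..lmax}. b > 1 \<and> k Ustar b = c)"
    if one: "k Ustar 1 = c"
  proof -
    obtain x1 x2 p where xs: "x1 \<in> {0..lmax}" "x1 \<noteq> 1" "x2 \<in> {0..lmax}" "x2 \<noteq> 1"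
      "p > 0" "p < 1" "p * x1 + (1 - p) * x2 = 1" "F 1 \<le> p * F x1 + (1 - p) * F x2"
    proof -
      have "\<exists>x1\<in>{0..lmax} - {1}. \<exists>x2\<in>{0..lmax} - {1}. \<exists>p\<in>{0<..<1}.
        p * x1 + (1 - p) * x2 = 1 \<and> \<not> F 1 > p * F x1 + (1 - p) * F x2"
        using notcl unfolding concave_like_def by blast
      then obtain x1 x2 p where h: "x1\<in>{0..lmax} - {1}" "x2\<in>{0..lmax} - {1}" "p\<in>{0<..<1}"
        "p * x1 + (1 - p) * x2 = 1" "\<not> F 1 > p * F x1 + (1 - p) * F x2" by blast
      show ?thesis by (rule that) (use h in \<open>auto simp: not_less\<close>)
    qed
    have "p * k Ustar x1 + (1 - p) * k Ustar x2 = - (p * F x1 + (1 - p) * F x2) + Ustar * (p * x1 + (1 - p) * x2) - Ustar"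
      unfolding k_def by algebra
    also have "\<dots> \<le> - F 1" using xs by simp
    also have "\<dots> = c" using one unfolding k_def by simp
    finally have le: "p * (k Ustar x1 - c) + (1 - p) * (k Ustar x2 - c) \<le> 0" by (simp add: algebra_simps)
    have g1: "p * (k Ustar x1 - c) \<ge> 0" using cle xs by simp
    have g2: "(1 - p) * (k Ustar x2 - c) \<ge> 0" using cle xs by simp
    have k1: "k Ustar x1 = c" using le g1 g2 xs
      by (smt (verit) mult_pos_pos cle)
    have k2: "k Ustar x2 = c" using le g1 g2 xs
      by (smt (verit) mult_pos_pos cle)
    have eq: "p * (1 - x1) = (1 - p) * (x2 - 1)" using xs(7) by (simp add: algebra_simps)
    show ?thesis
    proof (cases "x1 < 1")
      case True
      then have "p * (1 - x1) > 0" using xs by simp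
      then have "x2 > 1" using eq xs by (smt (verit) mult_nonneg_nonpos)
      then show ?thesis using True xs k1 k2 by blast
    next
      case False
      then have "x1 > 1" using xs by simp
      then have "p * (1 - x1) < 0" using xs by (simp add: mult_pos_neg)
      then have "x2 < 1" using eq xs by (smt (verit) mult_nonneg_nonneg)
      then show ?thesis using \<open>x1 > 1\<close> xs k1 k2 by blast
    qed
  qed
  obtain a where a: "a \<in> {0..lmax}" "a < 1" "k Ustar a = c"
    using step3 ncl by (metis less_eq_real_def)
  have bex: "\<exists>b\<in>{0..lmax}. b > 1 \<and> k Ustar b = c" if "Ustar > 0"
    using step5[OF that] ncl by (metis less_eq_real_def)
  have cid: "continuous_on {0..lmax} (\<lambda>x::real. x)" by (intro continuous_intros)
  have ub: "(\<integral>x. F x \<partial>M) \<le> - c" if M: "prob_on lmax M" "(\<integral>x. x \<partial>M) \<le> 1" for M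
  proof -
    have cg: "continuous_on {0..lmax} (\<lambda>x. - F x + Ustar * x)" by (intro continuous_intros cF)
    have "c + Ustar \<le> (\<integral>x. (- F x + Ustar * x) \<partial>M)"
      by (rule prob_on_ge[OF M(1) cg]) (use cle in \<open>auto simp: k_def\<close>)
    also have "\<dots> = - (\<integral>x. F x \<partial>M) + Ustar * (\<integral>x. x \<partial>M)"
      using prob_on_int[OF M(1) cF] prob_on_int[OF M(1) cid] by simp
    finally have "c + Ustar \<le> - (\<integral>x. F x \<partial>M) + Ustar * (\<integral>x. x \<partial>M)" .
    moreover have "Ustar * (\<integral>x. x \<partial>M) \<le> Ustar" using M(2) Ustar_nonneg
      by (metis mult.right_neutral mult_left_mono)
    ultimately show ?thesis by simp
  qed
  have Fs: "Fstar F lmax = - c"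
  proof (cases "Ustar = 0")
    case True
    show ?thesis
      apply (rule Fstar_eq[OF cF prob_on_return[OF a(1)]])
      using int_return[OF a(1) cid] int_return[OF a(1) cF] a True ub unfolding k_def by auto
  next
    case False
    then have Up: "Ustar > 0" using Ustar_nonneg by simp
    obtain b where b: "b \<in> {0..lmax}" "b > 1" "k Ustar b = c" using bex[OF Up] by blast
    define p where "p = (b - 1) / (b - a)"
    have p0: "0 \<le> p" "p \<le> 1" unfolding p_def using a b by auto
    have ba: "b - a \<noteq> 0" using a b by simp
    have pb: "p * (b - a) = b - 1" unfolding p_def using ba by simp
    have "p * a + (1 - p) * b = b - p * (b - a)" by (simp add: algebra_simps)
    then have mean: "p * a + (1 - p) * b = 1" using pb by simp
    have Fa: "F a = Ustar * a - Ustar - c" and Fb: "F b = Ustar * b - Ustar - c"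
      using a b unfolding k_def by auto
    have "p * F a + (1 - p) * F b = Ustar * (p * a + (1 - p) * b) - Ustar - c"
      unfolding Fa Fb by (simp add: algebra_simps)
    then have vF: "p * F a + (1 - p) * F b = - c" using mean by simp
    show ?thesis
      apply (rule Fstar_eq[OF cF two_prob[OF a(1) b(1), of p]])
      using two_int[OF a(1) b(1) cid p0] two_int[OF a(1) b(1) cF p0] mean vF ub by auto
  qed
  have boundA: "dualq F lmax U \<le> c - (U - Ustar) * (1 - a)" for U
    using char[of U] a kU[of U a] by (smt (verit) mult_minus_right)
  have boundB: "dualq F lmax U \<le> c - (Ustar - U) * (b - 1)" if "b \<in> {0..lmax}" "k Ustar b = c" for U b
    using char[of U] that kU[of U b] by (smt (verit) mult_minus_right mult_minus_left)
  have L: "\<exists>L > 0. \<forall>U \<ge> 0. c \<ge> dualq F lmax U + L * \<bar>Ustar - U\<bar>"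
  proof (cases "Ustar = 0")
    case True
    show ?thesis
    proof (intro exI[of _ "1 - a"] conjI allI impI)
      show "1 - a > 0" using a by simp
      fix U :: real assume "U \<ge> 0"
      then show "c \<ge> dualq F lmax U + (1 - a) * \<bar>Ustar - U\<bar>"
        using boundA[of U] True by (simp add: algebra_simps)
    qed
  next
    case False
    then have Up: "Ustar > 0" using Ustar_nonneg by simp
    obtain b where b: "b \<in> {0..lmax}" "b > 1" "k Ustar b = c" using bex[OF Up] by blast
    show ?thesis
    proof (intro exI[of _ "min (1 - a) (b - 1)"] conjI allI impI)
      show "min (1 - a) (b - 1) > 0" using a b by simp
      fix U :: real assume "U \<ge> 0"
      show "c \<ge> dualq F lmax U + min (1 - a) (b - 1) * \<bar>Ustar - U\<bar>"
      proof (cases "U \<ge> Ustar")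
        case True
        have "min (1 - a) (b - 1) * \<bar>Ustar - U\<bar> = min (1 - a) (b - 1) * (U - Ustar)"
          using True by simp
        also have "\<dots> \<le> (1 - a) * (U - Ustar)" using True by (intro mult_right_mono) auto
        finally have "min (1 - a) (b - 1) * \<bar>Ustar - U\<bar> \<le> (U - Ustar) * (1 - a)" by (simp only: mult.commute)
        then show ?thesis using boundA[of U] by simp
      next
        case False
        have "min (1 - a) (b - 1) * \<bar>Ustar - U\<bar> = min (1 - a) (b - 1) * (Ustar - U)"
          using False by simp
        also have "\<dots> \<le> (b - 1) * (Ustar - U)" using False by (intro mult_right_mono) auto
        finally have "min (1 - a) (b - 1) * \<bar>Ustar - U\<bar> \<le> (Ustar - U) * (b - 1)" by (simp only: mult.commute)
        then show ?thesis using boundB[OF b(1) b(3), of U] by simp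
      qed
    qed
  qed
  show ?thesis using Fs L unfolding c_def by simp
qed

end
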